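(* Let $v\ne e$ be a boolean permutation. Then no optimal partner $w$ for $v$ satisfies $w\ge v$ in the Bruhat order.
   Context: $\sigma_i=(i,i+1)$; $\ell$ is length; $B(w)$ is the principal Bruhat order ideal of $w$; $e$ is the identity. A permutation is boolean if its reduced words have no repeated letters. For $Q\subseteq\mathfrak{S}_n$ with induced Bruhat order, an almost perfect matching of $Q$ is a chain $\emptyset=Q_0\subset\cdots\subset Q_l=Q$ of coideals (upward-closed subsets of $Q$) with each $Q_i\setminus Q_{i-1}$ a pair $\{x_i,y_i\}$, $x_i<y_i$, $\ell(y_i)=\ell(x_i)+1$, except for exactly one $i$ where it is a singleton $\{z\}$ (the unmatched element). For boolean $v$, $\textsf{ork}(v)$ is the largest $\ell(z)$ over all $w\in\mathfrak{S}_n$ and all almost perfect matchings of $B(v)\cap B(w)$ with unmatched element $z$; an optimal partner of $v$ is a $w$ such that $B(v)\cap B(w)$ has an almost perfect matching whose unmatched element has length $\textsf{ork}(v)$. *)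

theory Defs
  imports "HOL-Combinatorics.Combinatorics"
begin

definition Sym :: "nat \<Rightarrow> (nat \<Rightarrow> nat) set" where
  "Sym n = {p. p permutes {1..n}}"

text \<open>Coxeter length = number of inversions.\<close>
definition len :: "nat \<Rightarrow> (nat \<Rightarrow> nat) \<Rightarrow> nat" where
  "len n p = card {(i, j). 1 \<le> i \<and> i < j \<and> j \<le> n \<and> p j < p i}"

definition sigma :: "nat \<Rightarrow> nat \<Rightarrow> nat" where
  "sigma i = Transposition.transpose i (Suc i)"

definition word_prod :: "nat list \<Rightarrow> nat \<Rightarrow> nat" where
  "word_prod ws = foldr (\<lambda>a acc. sigma a \<circ> acc) ws id"

definition reduced_word :: "nat \<Rightarrow> (nat \<Rightarrow> nat) \<Rightarrow> nat list \<Rightarrow> bool" where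
  "reduced_word n w ws \<longleftrightarrow> set ws \<subseteq> {1..<n} \<and> word_prod ws = w \<and> length ws = len n w"

definition boolean_perm :: "nat \<Rightarrow> (nat \<Rightarrow> nat) \<Rightarrow> bool" where
  "boolean_perm n w \<longleftrightarrow> w \<in> Sym n \<and> (\<forall>ws. reduced_word n w ws \<longrightarrow> distinct ws)"

definition bruhat_step :: "nat \<Rightarrow> ((nat \<Rightarrow> nat) \<times> (nat \<Rightarrow> nat)) set" where
  "bruhat_step n = {(u, u \<circ> Transposition.transpose i j) | u i j.
      u \<in> Sym n \<and> i \<in> {1..n} \<and> j \<in> {1..n} \<and> i \<noteq> j \<and>
      len n u < len n (u \<circ> Transposition.transpose i j)}"

definition bruhat_le :: "nat \<Rightarrow> (nat \<Rightarrow> nat) \<Rightarrow> (nat \<Rightarrow> nat) \<Rightarrow> bool" where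
  "bruhat_le n u w \<longleftrightarrow> u \<in> Sym n \<and> w \<in> Sym n \<and> (u, w) \<in> (bruhat_step n)\<^sup>*"

definition bruhat_less :: "nat \<Rightarrow> (nat \<Rightarrow> nat) \<Rightarrow> (nat \<Rightarrow> nat) \<Rightarrow> bool" where
  "bruhat_less n u w \<longleftrightarrow> bruhat_le n u w \<and> u \<noteq> w"

definition bideal :: "nat \<Rightarrow> (nat \<Rightarrow> nat) \<Rightarrow> (nat \<Rightarrow> nat) set" where
  "bideal n w = {u. bruhat_le n u w}"

definition coideal :: "nat \<Rightarrow> (nat \<Rightarrow> nat) set \<Rightarrow> (nat \<Rightarrow> nat) set \<Rightarrow> bool" where
  "coideal n Q C \<longleftrightarrow> C \<subseteq> Q \<and> (\<forall>x\<in>C. \<forall>y\<in>Q. bruhat_le n x y \<longrightarrow> y \<in> C)"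

text \<open>Q has an almost perfect matching with unmatched element z:
  a chain Qs!0 = {} \<subseteq> ... \<subseteq> Qs!l = Q of coideals whose successive
  differences are covering pairs, except exactly one which is {z}.\<close>
definition apm_unmatched :: "nat \<Rightarrow> (nat \<Rightarrow> nat) set \<Rightarrow> (nat \<Rightarrow> nat) \<Rightarrow> bool" where
  "apm_unmatched n Q z \<longleftrightarrow>
    (\<exists>Qs :: (nat \<Rightarrow> nat) set list. \<exists>l. length Qs = Suc l \<and> Qs ! 0 = {} \<and> Qs ! l = Q \<and>
       (\<forall>i\<le>l. coideal n Q (Qs ! i)) \<and>
       (\<forall>i<l. Qs ! i \<subseteq> Qs ! Suc i) \<and>
       (\<exists>i0<l. Qs ! Suc i0 - Qs ! i0 = {z} \<and>
          (\<forall>i<l. i \<noteq> i0 \<longrightarrow>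
             (\<exists>x y. Qs ! Suc i - Qs ! i = {x, y} \<and> bruhat_less n x y \<and> len n y = len n x + 1))))"

definition ork :: "nat \<Rightarrow> (nat \<Rightarrow> nat) \<Rightarrow> nat" where
  "ork n v = Max {len n z | z w. w \<in> Sym n \<and> apm_unmatched n (bideal n v \<inter> bideal n w) z}"

definition optimal_partner :: "nat \<Rightarrow> (nat \<Rightarrow> nat) \<Rightarrow> (nat \<Rightarrow> nat) \<Rightarrow> bool" where
  "optimal_partner n v w \<longleftrightarrow> w \<in> Sym n \<and>
     (\<exists>z. apm_unmatched n (bideal n v \<inter> bideal n w) z \<and> len n z = ork n v)"

end

theory Submission imports Defs begin

definition invs :: "nat \<Rightarrow> (nat \<Rightarrow> nat) \<Rightarrow> (nat \<times> nat) set" where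
  "invs n p = {(i, j). 1 \<le> i \<and> i < j \<and> j \<le> n \<and> p j < p i}"

lemma len_invs: "len n p = card (invs n p)"
  by (simp add: len_def invs_def)

lemma finite_invs: "finite (invs n p)"
  by (rule finite_subset[of _ "{1..n} \<times> {1..n}"]) (auto simp: invs_def)

lemma len_swap_lt:
  assumes ab: "a < b" "1 \<le> a" "b \<le> n" and pab: "p a < p b"
  shows "len n p < len n (p \<circ> Transposition.transpose a b)"
proof -
  define q where "q = p \<circ> Transposition.transpose a b"
  define \<tau> where "\<tau> = Transposition.transpose a b"
  define \<psi> where "\<psi> = (\<lambda>(i::nat, j::nat). if i < a \<or> b < j then (\<tau> i, \<tau> j) else (i, j))"
  have qa: "q a = p b" and qb: "q b = p a" and qo: "\<And>c. c \<noteq> a \<Longrightarrow> c \<noteq> b \<Longrightarrow> q c = p c"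
    using ab by (auto simp: q_def)
  have inv: "\<psi> (\<psi> x) = x" if "x \<in> invs n p" for x
    using that ab unfolding \<psi>_def \<tau>_def invs_def by (auto simp: transpose_def split: if_splits)
  have inj: "inj_on \<psi> (invs n p)"
    by (metis inj_onI inv)
  have sub: "\<psi> ` invs n p \<subseteq> invs n q"
  proof
    fix y assume "y \<in> \<psi> ` invs n p"
    then obtain i j where ij: "(i, j) \<in> invs n p" and y: "y = \<psi> (i, j)" by auto
    from ij have ij': "1 \<le> i" "i < j" "j \<le> n" "p j < p i" by (auto simp: invs_def)
    show "y \<in> invs n q"
      using ij' ab pab qa qb qo unfolding y \<psi>_def \<tau>_def invs_def
      by (auto simp: transpose_def split: if_splits)
  qed
  have ab_in: "(a, b) \<in> invs n q" using ab pab qa qb by (auto simp: invs_def)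
  have ab_notin: "(a, b) \<notin> \<psi> ` invs n p"
  proof
    assume "(a, b) \<in> \<psi> ` invs n p"
    then obtain x where x: "x \<in> invs n p" "(a, b) = \<psi> x" by auto
    then have "\<psi> (a, b) = x" using inv by simp
    moreover have "\<psi> (a, b) = (a, b)" using ab by (simp add: \<psi>_def)
    ultimately show False using x pab by (auto simp: invs_def)
  qed
  have "card (invs n p) = card (\<psi> ` invs n p)" using inj by (simp add: card_image)
  also have "\<dots> < card (invs n q)"
    using sub ab_in ab_notin finite_invs by (intro psubset_card_mono) auto
  finally show ?thesis by (simp add: len_invs q_def)
qed


lemma len_step_iff:
  assumes p: "p permutes {1..n}" and ab: "a \<noteq> b" "a \<in> {1..n}" "b \<in> {1..n}"
  shows "len n p < len n (p \<circ> Transposition.transpose a b) \<longleftrightarrow> (a < b \<longleftrightarrow> p a < p b)"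
proof -
  have pne: "p a \<noteq> p b" using p ab by (metis permutes_inj injD)
  have gen: "len n p < len n (p \<circ> Transposition.transpose a b) \<longleftrightarrow> p a < p b"
    if "a < b" "p a \<noteq> p b" "a \<in> {1..n}" "b \<in> {1..n}" for a b
  proof
    assume "p a < p b" then show "len n p < len n (p \<circ> Transposition.transpose a b)"
      using len_swap_lt that by auto
  next
    assume lt: "len n p < len n (p \<circ> Transposition.transpose a b)"
    show "p a < p b"
    proof (rule ccontr)
      assume "\<not> p a < p b"
      then have "p b < p a" using that by auto
      define q where "q = p \<circ> Transposition.transpose a b"
      have "q a < q b" using \<open>p b < p a\<close> by (simp add: q_def)
      then have "len n q < len n (q \<circ> Transposition.transpose a b)"
        using len_swap_lt that by auto
      also have "q \<circ> Transposition.transpose a b = p" by (simp add: q_def comp_assoc)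
      finally have "len n q < len n p" .
      then show False using lt unfolding q_def[symmetric] by linarith
    qed
  qed
  show ?thesis
  proof (cases "a < b")
    case True then show ?thesis using gen ab pne by auto
  next
    case False
    then have "b < a" using ab by auto
    then show ?thesis using gen[of b a] ab pne by (auto simp: transpose_commute)
  qed
qed

lemma exists_descent:
  assumes v: "v permutes {1..n}" and ne: "v \<noteq> id"
  shows "\<exists>k. 1 \<le> k \<and> Suc k \<le> n \<and> v (Suc k) < v k"
proof (rule ccontr)
  assume "\<not> ?thesis"
  then have asc: "\<And>k. 1 \<le> k \<Longrightarrow> Suc k \<le> n \<Longrightarrow> v k \<le> v (Suc k)" by (meson not_le)
  have inj: "inj v" using v permutes_inj by blast
  have ge: "i \<le> v i" if "i \<in> {1..n}" for i
    using that
  proof (induction i)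
    case 0 then show ?case by simp
  next
    case (Suc i)
    show ?case
    proof (cases "i = 0")
      case True then show ?thesis using Suc.prems v
        by (metis One_nat_def Suc_leI atLeastAtMost_iff permutes_in_image le_trans not_gr0)
    next
      case False
      then have "i \<le> v i" using Suc by auto
      moreover have "v i \<le> v (Suc i)" using asc False Suc.prems by auto
      moreover have "v i \<noteq> v (Suc i)" using inj by (metis injD n_not_Suc_n)
      ultimately show ?thesis by auto
    qed
  qed
  have bij: "bij_betw v {1..n} {1..n}" using v permutes_imp_bij by blast
  have sumeq: "(\<Sum>i\<in>{1..n}. v i) = (\<Sum>i\<in>{1..n}. i)"
    using sum.reindex_bij_betw[OF bij, of id] by simp
  obtain x where "v x \<noteq> x" using ne by (metis eq_id_iff)
  then have x: "x \<in> {1..n}" using v permutes_not_in by metis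
  then have "x < v x" using ge \<open>v x \<noteq> x\<close> by (simp add: le_neq_implies_less)
  then have "(\<Sum>i\<in>{1..n}. i) < (\<Sum>i\<in>{1..n}. v i)"
    using x ge by (intro sum_strict_mono_ex1) auto
  then show False using sumeq by simp
qed


lemma step_intro:
  assumes "u \<in> Sym n" "i \<in> {1..n}" "j \<in> {1..n}" "i \<noteq> j"
    "len n u < len n (u \<circ> Transposition.transpose i j)"
  shows "(u, u \<circ> Transposition.transpose i j) \<in> bruhat_step n"
  unfolding bruhat_step_def using assms by blast

lemma lift:
  assumes v: "v \<in> Sym n" and k: "1 \<le> k" "Suc k \<le> n" and desc: "v (Suc k) < v k"
    and uv: "(u, v) \<in> (bruhat_step n)\<^sup>*"
  shows "(u \<circ> Transposition.transpose k (Suc k), v) \<in> (bruhat_step n)\<^sup>*"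
  using uv
proof (induction rule: converse_rtrancl_induct)
  case base
  let ?s = "Transposition.transpose k (Suc k)"
  have vp: "v permutes {1..n}" using v by (simp add: Sym_def)
  have vs: "v \<circ> ?s \<in> Sym n" using vp k
    by (simp add: Sym_def permutes_compose permutes_swap_id)
  have eq: "v \<circ> ?s \<circ> ?s = v" by (simp add: comp_assoc)
  have "len n (v \<circ> ?s) < len n (v \<circ> ?s \<circ> ?s)"
    using len_swap_lt[of k "Suc k" n "v \<circ> ?s"] k desc by simp
  then have "(v \<circ> ?s, v \<circ> ?s \<circ> ?s) \<in> bruhat_step n"
    using vs k by (intro step_intro) auto
  then have "(v \<circ> ?s, v) \<in> bruhat_step n" using eq by simp
  then show ?case by blast
next
  case (step y z)
  let ?s = "Transposition.transpose k (Suc k)"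
  from step.hyps(1) obtain i j where ys: "y \<in> Sym n" and ij: "i \<in> {1..n}" "j \<in> {1..n}" "i \<noteq> j"
    and z: "z = y \<circ> Transposition.transpose i j"
    and lz: "len n y < len n (y \<circ> Transposition.transpose i j)"
    unfolding bruhat_step_def by blast
  show ?case
  proof (cases "Transposition.transpose i j = ?s")
    case True
    then show ?thesis using z step.hyps(2) by metis
  next
    case False
    then have nij: "\<not> ((i = k \<and> j = Suc k) \<or> (i = Suc k \<and> j = k))"
      by (auto simp: transpose_commute)
    define i' where "i' = ?s i"
    define j' where "j' = ?s j"
    have yp: "y permutes {1..n}" using ys by (simp add: Sym_def)
    have ysp: "y \<circ> ?s permutes {1..n}" using yp k
      by (simp add: permutes_compose permutes_swap_id)
    have i'j': "i' \<in> {1..n}" "j' \<in> {1..n}" "i' \<noteq> j'"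
      using ij k unfolding i'_def j'_def by (auto simp: transpose_def)
    have ord: "(i' < j') \<longleftrightarrow> (i < j)"
      using ij nij unfolding i'_def j'_def by (auto simp: transpose_def)
    have vals: "(y \<circ> ?s) i' = y i" "(y \<circ> ?s) j' = y j"
      by (simp_all add: i'_def j'_def)
    have "(i < j \<longleftrightarrow> y i < y j)" using len_step_iff[OF yp ij(3) ij(1) ij(2)] lz by simp
    then have "len n (y \<circ> ?s) < len n (y \<circ> ?s \<circ> Transposition.transpose i' j')"
      using len_step_iff[OF ysp i'j'(3) i'j'(1) i'j'(2)] ord vals by simp
    moreover have "y \<circ> ?s \<circ> Transposition.transpose i' j' = z \<circ> ?s"
    proof -
      have "Transposition.transpose i j \<circ> ?s = ?s \<circ> Transposition.transpose i' j'"
        using transpose_comp_eq[of ?s i j] by (simp add: i'_def j'_def)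
      then show ?thesis using z by (simp add: comp_assoc)
    qed
    moreover have "y \<circ> ?s \<in> Sym n" using ysp by (simp add: Sym_def)
    ultimately have "(y \<circ> ?s, z \<circ> ?s) \<in> bruhat_step n"
      using step_intro[of "y \<circ> ?s" n i' j'] i'j' by simp
    then show ?thesis using step.IH by (meson converse_rtrancl_into_rtrancl)
  qed
qed

lemma even_inv:
  "finite A \<Longrightarrow> (\<forall>x\<in>A. f x \<in> A \<and> f (f x) = x \<and> f x \<noteq> x) \<Longrightarrow> even (card A)"
proof (induction "card A" arbitrary: A rule: less_induct)
  case less
  show ?case
  proof (cases "A = {}")
    case True then show ?thesis by simp
  next
    case False
    then obtain x where x: "x \<in> A" by auto
    define B where "B = A - {x, f x}"
    have fx: "f x \<in> A" "f x \<noteq> x" using less.prems x by auto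
    have cB: "card B = card A - 2" using x fx less.prems(1) unfolding B_def
      by (simp add: card_Diff_subset)
    have cA: "card A \<ge> 2" using x fx less.prems(1)
      by (metis card_2_iff card_mono empty_subsetI insert_subset)
    have "\<forall>y\<in>B. f y \<in> B \<and> f (f y) = y \<and> f y \<noteq> y"
    proof
      fix y assume y: "y \<in> B"
      then have yA: "y \<in> A" "y \<noteq> x" "y \<noteq> f x" by (auto simp: B_def)
      have h: "f y \<in> A" "f (f y) = y" "f y \<noteq> y" using less.prems(2) yA(1) by auto
      have "f y \<noteq> x" using h yA by auto
      moreover have "f y \<noteq> f x" using h yA less.prems(2) x by metis
      ultimately show "f y \<in> B \<and> f (f y) = y \<and> f y \<noteq> y" using h by (auto simp: B_def)
    qed
    then have "even (card B)" using less.hyps[of B] cB cA less.prems(1) unfolding B_def by auto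
    then show ?thesis using cB cA by auto
  qed
qed

lemma apm_odd:
  assumes fin: "finite Q" and apm: "apm_unmatched n Q z"
  shows "odd (card Q)"
proof -
  obtain Qs l i0 where len: "length Qs = Suc l" and q0: "Qs ! 0 = {}" and ql: "Qs ! l = Q"
    and co: "\<forall>i\<le>l. coideal n Q (Qs ! i)" and ch: "\<forall>i<l. Qs ! i \<subseteq> Qs ! Suc i"
    and i0: "i0 < l" "Qs ! Suc i0 - Qs ! i0 = {z}"
    and pr: "\<forall>i<l. i \<noteq> i0 \<longrightarrow> (\<exists>x y. Qs ! Suc i - Qs ! i = {x, y} \<and> bruhat_less n x y \<and> len n y = len n x + 1)"
    using apm unfolding apm_unmatched_def by blast
  have finQ: "finite (Qs ! i)" if "i \<le> l" for i
    using co that fin unfolding coideal_def by (meson finite_subset)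
  have "i \<le> l \<longrightarrow> (even (card (Qs ! i)) \<longleftrightarrow> i \<le> i0)" for i
  proof (induction i)
    case 0 then show ?case using q0 by simp
  next
    case (Suc i)
    show ?case
    proof
      assume si: "Suc i \<le> l"
      then have il: "i < l" by simp
      have sub: "Qs ! i \<subseteq> Qs ! Suc i" using ch il by blast
      have f1: "finite (Qs ! Suc i)" using finQ si by blast
      have cd: "card (Qs ! Suc i) = card (Qs ! i) + card (Qs ! Suc i - Qs ! i)"
        using sub f1 by (metis card_Diff_subset card_mono finite_subset le_add_diff_inverse)
      have IH: "even (card (Qs ! i)) \<longleftrightarrow> i \<le> i0" using Suc.IH il by simp
      show "even (card (Qs ! Suc i)) \<longleftrightarrow> Suc i \<le> i0"
      proof (cases "i = i0")
        case True
        then show ?thesis using cd i0 IH by simp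
      next
        case False
        then obtain x y where xy: "Qs ! Suc i - Qs ! i = {x, y}" "bruhat_less n x y"
          using pr il by blast
        then have "card (Qs ! Suc i - Qs ! i) = 2" by (simp add: bruhat_less_def)
        then show ?thesis using cd IH False by auto
      qed
    qed
  qed
  then show ?thesis using i0 ql by auto
qed

theorem lemma5p1:
  fixes n :: nat and v w :: "nat \<Rightarrow> nat"
  assumes "boolean_perm n v"
    and "v \<noteq> id"
    and "optimal_partner n v w"
  shows "\<not> bruhat_le n v w"
proof
  assume vw: "bruhat_le n v w"
  have vS: "v \<in> Sym n" using assms(1) by (simp add: boolean_perm_def)
  obtain z where apm: "apm_unmatched n (bideal n v \<inter> bideal n w) z"
    using assms(3) unfolding optimal_partner_def by blast
  have eqI: "bideal n v \<inter> bideal n w = bideal n v"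
    using vw unfolding bideal_def bruhat_le_def by (auto intro: rtrancl_trans)
  have finS: "finite (Sym n)" unfolding Sym_def by (simp add: finite_permutations)
  have fin: "finite (bideal n v)"
    by (rule finite_subset[OF _ finS]) (auto simp: bideal_def bruhat_le_def)
  have odd: "odd (card (bideal n v))" using apm_odd[OF fin] apm eqI by simp
  have vp: "v permutes {1..n}" using vS by (simp add: Sym_def)
  obtain k where k: "1 \<le> k" "Suc k \<le> n" "v (Suc k) < v k"
    using exists_descent[OF vp assms(2)] by blast
  let ?s = "Transposition.transpose k (Suc k)"
  have "\<forall>u\<in>bideal n v. u \<circ> ?s \<in> bideal n v \<and> u \<circ> ?s \<circ> ?s = u \<and> u \<circ> ?s \<noteq> u"
  proof
    fix u assume "u \<in> bideal n v"
    then have uS: "u \<in> Sym n" and uv: "(u, v) \<in> (bruhat_step n)\<^sup>*"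
      by (auto simp: bideal_def bruhat_le_def)
    have up: "u permutes {1..n}" using uS by (simp add: Sym_def)
    have "u \<circ> ?s \<in> Sym n" using up k by (simp add: Sym_def permutes_compose permutes_swap_id)
    moreover have "(u \<circ> ?s, v) \<in> (bruhat_step n)\<^sup>*" using lift[OF vS k uv] .
    moreover have "u \<circ> ?s \<circ> ?s = u" by (simp add: comp_assoc)
    moreover have "u \<circ> ?s \<noteq> u"
    proof
      assume "u \<circ> ?s = u"
      then have "u (Suc k) = u k" by (metis comp_apply transpose_apply_first)
      then show False using up by (metis permutes_inj injD n_not_Suc_n)
    qed
    ultimately show "u \<circ> ?s \<in> bideal n v \<and> u \<circ> ?s \<circ> ?s = u \<and> u \<circ> ?s \<noteq> u"
      using vS by (auto simp: bideal_def bruhat_le_def)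
  qed
  then have "even (card (bideal n v))" using even_inv[OF fin, of "\<lambda>u. u \<circ> ?s"] by simp
  then show False using odd by simp
qed

end
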